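(* Let $\{x_k\}$ be generated by the Subgradient-InexP method with Polyak's stepsize rule, under the standing assumptions (in particular $\Omega^*\neq\varnothing$). Then $\{x_k\}$ converges to a point $x_*\in\Omega^*$.
   Context: Problem: minimize a convex $f:\mathbb{R}^n\to\mathbb{R}$ over a nonempty closed convex $C\subset\mathbb{R}^n$; $f^*:=\inf_{x\in C}f(x)$, $\Omega^*$ the set of minimizers. For $\epsilon\ge0$, $\partial_\epsilon f(x):=\{s: f(y)\ge f(x)+\langle s,y-x\rangle-\epsilon\ \forall y\}$. Relative error tolerance function: any $\varphi_{\gamma,\theta,\lambda}:(\mathbb{R}^n)^3\to[0,\infty)$ with $\varphi_{\gamma,\theta,\lambda}(u,v,w)\le\gamma\|v-u\|^2+\theta\|w-v\|^2+\lambda\|w-u\|^2$; for $u\in C$, $\mathcal{P}_C(\varphi_{\gamma,\theta,\lambda},u,v):=\{w\in C:\langle v-w,z-w\rangle\le\varphi_{\gamma,\theta,\lambda}(u,v,w)\ \forall z\in C\}$. Subgradient-InexP method: $x_0\in C$; at iteration $k$, if $0\in\partial f(x_k)$ stop; otherwise choose nonzero $s_k\in\partial_{\epsilon_k}f(x_k)$, stepsize $t_k>0$, and $x_{k+1}\in\mathcal{P}_C(\varphi_{\gamma_k,\theta_k,\lambda_k},x_k,x_k-t_ks_k)$. Standing assumptions: $\gamma_k\in[0,\bar\gamma)$, $\theta_k\in[0,\bar\theta)$, $\lambda_k\in[0,\bar\lambda)$ with $\bar\gamma\ge0$, $\bar\theta,\bar\lambda\in[0,1/2)$; the sequence is infinite.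 Let $\nu:=\frac{1+2\bar\gamma}{1-2\bar\lambda}$. Polyak's stepsize rule: $\Omega^*\neq\varnothing$, $f^*>-\infty$ known; $\mu\ge0$, $\underline\beta>0$, $\bar\beta>0$; $\{\epsilon_k\}$ nonincreasing, $0<\underline\beta\le\beta_k\le\bar\beta<\frac{1}{2\mu+\nu}$ and $0<\epsilon_k\le\mu\beta_k[f(x_k)-f^*]$ for all $k$; $t_k:=\beta_k\frac{f(x_k)-f^*}{\|s_k\|^2}$. *)

theory Defs
  imports "HOL-Analysis.Analysis"
begin

definition eps_subdiff :: "('a::real_inner \<Rightarrow> real) \<Rightarrow> real \<Rightarrow> 'a \<Rightarrow> 'a set" where
  "eps_subdiff f \<epsilon> x = {s. \<forall>y. f y \<ge> f x + inner s (y - x) - \<epsilon>}"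

definition opt_val :: "('a \<Rightarrow> real) \<Rightarrow> 'a set \<Rightarrow> real" where
  "opt_val f C = (INF x\<in>C. f x)"

definition opt_set :: "('a \<Rightarrow> real) \<Rightarrow> 'a set \<Rightarrow> 'a set" where
  "opt_set f C = {x\<in>C. \<forall>y\<in>C. f x \<le> f y}"

definition rel_err_tol :: "real \<Rightarrow> real \<Rightarrow> real \<Rightarrow> ('a::real_normed_vector \<Rightarrow> 'a \<Rightarrow> 'a \<Rightarrow> real) \<Rightarrow> bool" where
  "rel_err_tol \<gamma> \<theta> lam \<phi> \<longleftrightarrow>
     (\<forall>u v w. 0 \<le> \<phi> u v w \<and>
        \<phi> u v w \<le> \<gamma> * (norm (v - u))\<^sup>2 + \<theta> * (norm (w - v))\<^sup>2 + lam * (norm (w - u))\<^sup>2)"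

definition inexact_proj :: "'a::real_inner set \<Rightarrow> ('a \<Rightarrow> 'a \<Rightarrow> 'a \<Rightarrow> real) \<Rightarrow> 'a \<Rightarrow> 'a \<Rightarrow> 'a set" where
  "inexact_proj C \<phi> u v = {w\<in>C. \<forall>z\<in>C. inner (v - w) (z - w) \<le> \<phi> u v w}"

end

theory Submission
  imports Defs
begin


lemma norm_diff_sq_expand:
  fixes a b :: "'a::real_inner"
  shows "(norm (a - b))\<^sup>2 = (norm a)\<^sup>2 - 2 * inner a b + (norm b)\<^sup>2"
  by (simp add: power2_norm_eq_inner inner_diff_left inner_diff_right inner_commute)

lemma proj_bound:
  fixes u v w z :: "'a::real_inner"
  assumes w: "w \<in> inexact_proj C \<phi> u v" and r: "rel_err_tol \<gamma> \<theta> lam \<phi>"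
    and z: "z \<in> C" and th: "\<theta> \<le> 1/2"
  shows "(norm (w - z))\<^sup>2 \<le> (norm (v - z))\<^sup>2 + 2*\<gamma>*(norm (v-u))\<^sup>2 + 2*lam*(norm (w-u))\<^sup>2"
proof -
  have i: "inner (v - w) (z - w) \<le> \<phi> u v w" using w z unfolding inexact_proj_def by auto
  have p: "\<phi> u v w \<le> \<gamma> * (norm (v - u))\<^sup>2 + \<theta> * (norm (w - v))\<^sup>2 + lam * (norm (w - u))\<^sup>2"
    using r unfolding rel_err_tol_def by blast
  have e: "(norm (v - z))\<^sup>2 = (norm (v-w))\<^sup>2 - 2 * inner (v-w) (z-w) + (norm (z-w))\<^sup>2"
    using norm_diff_sq_expand[of "v-w" "z-w"] by simp
  have p': "\<phi> u v w \<le> \<gamma> * (norm (v - u))\<^sup>2 + \<theta> * (norm (v - w))\<^sup>2 + lam * (norm (w - u))\<^sup>2"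
    using p by (simp add: norm_minus_commute)
  have e': "(norm (v - z))\<^sup>2 = (norm (v-w))\<^sup>2 - 2 * inner (v-w) (z-w) + (norm (w-z))\<^sup>2"
    using e by (simp add: norm_minus_commute)
  have "\<theta> * (norm (v - w))\<^sup>2 \<le> 1/2 * (norm (v - w))\<^sup>2"
    using th by (intro mult_right_mono) auto
  then show ?thesis using i p' e' by linarith
qed

lemma step_descent:
  fixes xk w s p :: "'a::real_inner"
  assumes w: "w \<in> inexact_proj C \<phi> xk (xk - t *\<^sub>R s)" and r: "rel_err_tol \<gamma> \<theta> lam \<phi>"
    and xk: "xk \<in> C" and p: "p \<in> C" and th: "\<theta> \<le> 1/2"
    and g: "0 \<le> \<gamma>" "\<gamma> \<le> gb" and l: "0 \<le> lam" "lam \<le> lb" "lb < 1/2"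
    and sub: "s \<in> eps_subdiff f \<epsilon> xk" and fp: "f p = fs"
    and eps: "\<epsilon> \<le> \<mu> * \<beta> * (f xk - fs)" and mu: "0 \<le> \<mu>" and tpos: "t > 0"
    and snz: "s \<noteq> 0" and tdef: "t = \<beta> * (f xk - fs) / (norm s)\<^sup>2"
    and bet: "\<beta> * (2 * \<mu> + (1 + 2 * gb) / (1 - 2 * lb)) \<le> 1"
    and dpos: "f xk - fs \<ge> 0"
  shows "(norm (w - p))\<^sup>2 \<le> (norm (xk - p))\<^sup>2 - t * (f xk - fs)"
proof -
  define v where "v = xk - t *\<^sub>R s"
  define d where "d = f xk - fs"
  define T where "T = (norm (t *\<^sub>R s))\<^sup>2"
  define A where "A = (norm (w - xk))\<^sup>2"
  define \<nu> where "\<nu> = (1 + 2 * gb) / (1 - 2 * lb)"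
  have vx: "norm (v - xk) = norm (t *\<^sub>R s)" by (simp add: v_def)
  have h1: "(norm (w - p))\<^sup>2 \<le> (norm (v - p))\<^sup>2 + 2*\<gamma>*T + 2*lam*A"
    using proj_bound[OF w[folded v_def] r p th] vx unfolding T_def A_def by simp
  have h2: "A \<le> T + 2*\<gamma>*T + 2*lam*A"
    using proj_bound[OF w[folded v_def] r xk th] vx unfolding T_def A_def by simp
  have h3: "(norm (v - p))\<^sup>2 = (norm (xk - p))\<^sup>2 - 2 * inner (xk - p) (t *\<^sub>R s) + T"
    using norm_diff_sq_expand[of "xk - p" "t *\<^sub>R s"] unfolding T_def v_def
    by (simp add: algebra_simps)
  have "f p \<ge> f xk + inner s (p - xk) - \<epsilon>" using sub unfolding eps_subdiff_def by blast
  then have h4: "inner (xk - p) s \<ge> d - \<epsilon>" unfolding d_def using fp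
    by (simp add: inner_diff_left inner_diff_right inner_commute)
  have h4': "inner (xk - p) (t *\<^sub>R s) = t * inner (xk - p) s" by simp
  have ns: "(norm s)\<^sup>2 > 0" using snz by simp
  have h5: "T = t * \<beta> * d"
  proof -
    have "T = t * (t * (norm s)\<^sup>2)" unfolding T_def by (simp add: power2_eq_square)
    also have "t * (norm s)\<^sup>2 = \<beta> * d" using tdef ns unfolding d_def by simp
    finally show ?thesis by simp
  qed
  have T0: "T \<ge> 0" unfolding T_def by simp
  have A0: "A \<ge> 0" unfolding A_def by simp
  define gg where "gg = 1 + 2*\<gamma>"
  define ll where "ll = 1 - 2*lam"
  have ll0: "ll > 0" "ll \<le> 1" unfolding ll_def using l by auto
  have lA: "ll * A \<le> gg * T" using h2 unfolding ll_def gg_def by (simp add: algebra_simps)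
  have k1: "ll * (gg * T + (1 - ll) * A) \<le> gg * T"
  proof -
    have "(1 - ll) * (ll * A) \<le> (1 - ll) * (gg * T)"
      using lA ll0 by (intro mult_left_mono) auto
    then show ?thesis by (simp add: algebra_simps)
  qed
  have k2: "gg * T + (1 - ll) * A \<le> gg * T / ll"
    using k1 ll0 by (simp add: field_simps mult.commute)
  have k3: "gg / ll \<le> \<nu>" unfolding \<nu>_def gg_def ll_def
    using g l by (intro frac_le) auto
  have k4: "gg * T / ll \<le> \<nu> * T" using mult_right_mono[OF k3 T0] by simp
  have k5: "T + 2*\<gamma>*T + 2*lam*A \<le> \<nu> * T"
    using k2 k4 unfolding gg_def ll_def by (simp add: algebra_simps)
  have td: "t * d \<ge> 0" using tpos dpos unfolding d_def by simp
  have e2: "t * \<epsilon> \<le> t * (\<mu> * \<beta> * d)" using eps tpos unfolding d_def by simp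
  have b1: "t * d * (\<beta> * (2 * \<mu> + \<nu>)) \<le> t * d" using mult_left_mono[OF bet[folded \<nu>_def] td] by simp
  have "(norm (w - p))\<^sup>2 \<le> (norm (xk - p))\<^sup>2 - 2 * t * d + 2 * t * \<epsilon> + \<nu> * T"
    using h1 h3 h4 h4' k5 tpos mult_left_mono[OF h4, of t] by (simp add: algebra_simps)
  also have "\<dots> \<le> (norm (xk - p))\<^sup>2 - 2 * t * d + t * d * (\<beta> * (2 * \<mu> + \<nu>))"
    using e2 h5 by (simp add: algebra_simps)
  also have "\<dots> \<le> (norm (xk - p))\<^sup>2 - t * d" using b1 by (simp add: mult.commute)
  finally show ?thesis unfolding d_def .
qed


theorem mainTheorem8:
  fixes f :: "'a::euclidean_space \<Rightarrow> real" and C :: "'a set"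
    and x s :: "nat \<Rightarrow> 'a" and \<epsilon> t \<beta> \<gamma> \<theta> lam :: "nat \<Rightarrow> real"
    and \<phi> :: "nat \<Rightarrow> 'a \<Rightarrow> 'a \<Rightarrow> 'a \<Rightarrow> real"
    and \<gamma>bar \<theta>bar lambar \<mu> \<beta>lo \<beta>hi :: real
  assumes f_convex: "convex_on UNIV f"
    and C_closed: "closed C" and C_convex: "convex C" and C_ne: "C \<noteq> {}"
    \<comment> \<open>standing assumptions on the tolerance parameters\<close>
    and \<gamma>bar: "0 \<le> \<gamma>bar" and \<theta>bar: "0 \<le> \<theta>bar" "\<theta>bar < 1/2"
    and lambar: "0 \<le> lambar" "lambar < 1/2"
    and \<gamma>k: "\<And>k. 0 \<le> \<gamma> k \<and> \<gamma> k < \<gamma>bar"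
    and \<theta>k: "\<And>k. 0 \<le> \<theta> k \<and> \<theta> k < \<theta>bar"
    and lamk: "\<And>k. 0 \<le> lam k \<and> lam k < lambar"
    and \<phi>k: "\<And>k. rel_err_tol (\<gamma> k) (\<theta> k) (lam k) (\<phi> k)"
    \<comment> \<open>Subgradient-InexP method, generating an infinite sequence\<close>
    and x0: "x 0 \<in> C"
    and no_stop: "\<And>k. 0 \<notin> eps_subdiff f 0 (x k)"
    and s_sub: "\<And>k. s k \<in> eps_subdiff f (\<epsilon> k) (x k)"
    and s_nz: "\<And>k. s k \<noteq> 0"
    and t_pos: "\<And>k. t k > 0"
    and x_step: "\<And>k. x (Suc k) \<in> inexact_proj C (\<phi> k) (x k) (x k - t k *\<^sub>R s k)"
    \<comment> \<open>Polyak's stepsize rule\<close>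
    and opt_ne: "opt_set f C \<noteq> {}"
    and \<mu>: "0 \<le> \<mu>" and \<beta>lo: "0 < \<beta>lo" and \<beta>hi: "0 < \<beta>hi"
    and \<epsilon>_noninc: "decseq \<epsilon>"
    and \<beta>_bounds: "\<And>k. \<beta>lo \<le> \<beta> k \<and> \<beta> k \<le> \<beta>hi"
    and \<beta>hi_lt: "\<beta>hi < 1 / (2 * \<mu> + (1 + 2 * \<gamma>bar) / (1 - 2 * lambar))"
    and \<epsilon>_bounds: "\<And>k. 0 < \<epsilon> k \<and> \<epsilon> k \<le> \<mu> * \<beta> k * (f (x k) - opt_val f C)"
    and t_def: "\<And>k. t k = \<beta> k * (f (x k) - opt_val f C) / (norm (s k))\<^sup>2"
  shows "\<exists>xs\<in>opt_set f C. x \<longlonglongrightarrow> xs"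
proof -
  define fs where "fs = opt_val f C"
  define \<nu> where "\<nu> = (1 + 2 * \<gamma>bar) / (1 - 2 * lambar)"
  define d where "d = (\<lambda>k. f (x k) - fs)"
  have xC: "x k \<in> C" for k
  proof (induction k)
    case 0 then show ?case using x0 by simp
  next
    case (Suc k) then show ?case using x_step[of k] unfolding inexact_proj_def by blast
  qed
  obtain xo where xo: "xo \<in> opt_set f C" using opt_ne by blast
  have bddC: "bdd_below (f ` C)" using xo unfolding opt_set_def by (intro bdd_belowI2[of C "f xo"]) auto
  have fs_le: "fs \<le> f y" if "y \<in> C" for y
    unfolding fs_def opt_val_def using bddC that by (simp add: cINF_lower)
  have fopt: "f p = fs" if "p \<in> opt_set f C" for p
  proof (rule antisym)
    show "f p \<le> fs" unfolding fs_def opt_val_def using that C_ne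
      by (intro cINF_greatest) (auto simp: opt_set_def)
    show "fs \<le> f p" using that fs_le unfolding opt_set_def by blast
  qed
  have dpos: "d k > 0" for k
  proof (rule ccontr)
    assume "\<not> d k > 0"
    then have "\<mu> * \<beta> k * d k \<le> 0" using \<mu> \<beta>_bounds[of k] \<beta>lo
      by (simp add: mult_nonneg_nonpos)
    then show False using \<epsilon>_bounds[of k] unfolding d_def fs_def by simp
  qed
  have \<nu>pos: "\<nu> > 0" unfolding \<nu>_def using \<gamma>bar lambar by simp
  have bet: "\<beta> k * (2 * \<mu> + \<nu>) \<le> 1" for k
  proof -
    have q: "2 * \<mu> + \<nu> > 0" using \<nu>pos \<mu> by simp
    have "\<beta> k * (2 * \<mu> + \<nu>) \<le> \<beta>hi * (2 * \<mu> + \<nu>)"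
      using \<beta>_bounds[of k] q by (intro mult_right_mono) auto
    also have "\<dots> < 1" using \<beta>hi_lt q unfolding \<nu>_def[symmetric] by (simp add: field_simps)
    finally show ?thesis by simp
  qed
  have desc: "(norm (x (Suc k) - p))\<^sup>2 \<le> (norm (x k - p))\<^sup>2 - t k * d k"
    if p: "p \<in> opt_set f C" for p k
    unfolding d_def
  proof (rule step_descent[OF x_step[of k] \<phi>k[of k] xC[of k]])
    show "p \<in> C" using p unfolding opt_set_def by blast
    show "\<theta> k \<le> 1/2" using \<theta>k[of k] \<theta>bar by simp
    show "0 \<le> \<gamma> k" "\<gamma> k \<le> \<gamma>bar" using \<gamma>k[of k] by auto
    show "0 \<le> lam k" "lam k \<le> lambar" "lambar < 1/2" using lamk[of k] lambar by auto
    show "s k \<in> eps_subdiff f (\<epsilon> k) (x k)" by (rule s_sub)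
    show "f p = fs" using fopt p .
    show "\<epsilon> k \<le> \<mu> * \<beta> k * (f (x k) - fs)" using \<epsilon>_bounds[of k] unfolding fs_def by simp
    show "0 \<le> \<mu>" by (rule \<mu>)
    show "t k > 0" by (rule t_pos)
    show "s k \<noteq> 0" by (rule s_nz)
    show "t k = \<beta> k * (f (x k) - fs) / (norm (s k))\<^sup>2" using t_def[of k] unfolding fs_def .
    show "\<beta> k * (2 * \<mu> + (1 + 2 * \<gamma>bar) / (1 - 2 * lambar)) \<le> 1" using bet[of k] unfolding \<nu>_def .
    show "f (x k) - fs \<ge> 0" using dpos[of k] unfolding d_def by simp
  qed
  have td0: "t k * d k \<ge> 0" for k using less_imp_le[OF mult_pos_pos[OF t_pos[of k] dpos[of k]]] .
  have mono1: "norm (x (Suc k) - p) \<le> norm (x k - p)" if "p \<in> opt_set f C" for p k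
  proof -
    have "(norm (x (Suc k) - p))\<^sup>2 \<le> (norm (x k - p))\<^sup>2" using desc[OF that, of k] td0[of k] by linarith
    then show ?thesis using power2_le_imp_le norm_ge_zero by blast
  qed
  have monoN: "norm (x n - p) \<le> norm (x m - p)" if "p \<in> opt_set f C" "m \<le> n" for p m n
    using lift_Suc_antimono_le[of "\<lambda>k. norm (x k - p)", OF mono1[OF that(1)] that(2)] .
  define R where "R = norm (x 0 - xo)"
  have sumle: "(\<Sum>i<n. t i * d i) + (norm (x n - xo))\<^sup>2 \<le> R\<^sup>2" for n
  proof (induction n)
    case 0 then show ?case unfolding R_def by simp
  next
    case (Suc n) then show ?case using desc[OF xo, of n] by simp
  qed
  have sumle2: "(\<Sum>i<n. t i * d i) \<le> R\<^sup>2" for n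
    using sumle[of n] zero_le_power2[of "norm (x n - xo)"] by linarith
  have summ: "summable (\<lambda>i. t i * d i)"
    using summableI_nonneg_bounded[OF td0 sumle2] .
  have td_lim: "(\<lambda>i. t i * d i) \<longlonglongrightarrow> 0" using summable_LIMSEQ_zero[OF summ] .
  have xball: "norm (x k - xo) \<le> R" for k using monoN[OF xo, of 0 k] unfolding R_def by simp
  have fcont: "continuous_on UNIV f" using convex_on_continuous[OF open_UNIV f_convex] .
  have "compact (f ` cball xo (R + 1))"
    using compact_continuous_image[OF continuous_on_subset[OF fcont] compact_cball] by blast
  then have "bounded (f ` cball xo (R + 1))" by (rule compact_imp_bounded)
  then obtain B where B0: "\<forall>z\<in>f ` cball xo (R + 1). norm z \<le> B" unfolding bounded_iff by blast
  have B: "\<bar>f y\<bar> \<le> B" if "y \<in> cball xo (R+1)" for y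
    using B0 that by simp
  define M where "M = 2 * B + \<epsilon> 0"
  have sbound: "norm (s k) \<le> M" for k
  proof -
    define u where "u = (1 / norm (s k)) *\<^sub>R s k"
    have nu: "norm u = 1" unfolding u_def using s_nz[of k] by simp
    have su: "inner (s k) u = norm (s k)" unfolding u_def using s_nz[of k]
      by (simp add: power2_norm_eq_inner[symmetric] power2_eq_square)
    have "f (x k + u) \<ge> f (x k) + inner (s k) (x k + u - x k) - \<epsilon> k"
      using s_sub[of k] unfolding eps_subdiff_def by blast
    then have i1: "norm (s k) \<le> f (x k + u) - f (x k) + \<epsilon> k" using su by simp
    have "dist xo (x k + u) \<le> R + 1"
    proof -
      have "dist xo (x k + u) = norm ((x k - xo) + u)" by (simp add: dist_norm norm_minus_commute algebra_simps)
      also have "\<dots> \<le> norm (x k - xo) + norm u" by (rule norm_triangle_ineq)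
      finally show ?thesis using xball[of k] nu by simp
    qed
    then have b1: "\<bar>f (x k + u)\<bar> \<le> B" using B by simp
    have "dist xo (x k) \<le> R + 1" using xball[of k] by (simp add: dist_norm norm_minus_commute)
    then have b2: "\<bar>f (x k)\<bar> \<le> B" using B by simp
    have "\<epsilon> k \<le> \<epsilon> 0" using \<epsilon>_noninc unfolding decseq_def by simp
    then show ?thesis using i1 b1 b2 unfolding M_def by linarith
  qed
  have "norm (s 0) > 0" using s_nz[of 0] by simp
  then have Mpos: "M > 0" using sbound[of 0] by linarith
  have dsq: "(d k)\<^sup>2 \<le> (M\<^sup>2 / \<beta>lo) * (t k * d k)" for k
  proof -
    have ns: "(norm (s k))\<^sup>2 > 0" using s_nz[of k] by simp
    have tdk: "t k * d k = \<beta> k * (d k)\<^sup>2 / (norm (s k))\<^sup>2"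
      using t_def[of k] unfolding d_def fs_def by (simp add: power2_eq_square)
    have "\<beta>lo * (d k)\<^sup>2 \<le> \<beta> k * (d k)\<^sup>2" using \<beta>_bounds[of k] by (intro mult_right_mono) auto
    also have "\<dots> = (t k * d k) * (norm (s k))\<^sup>2" using tdk ns by simp
    also have "\<dots> \<le> (t k * d k) * M\<^sup>2"
      using sbound[of k] td0[of k] by (intro mult_left_mono power_mono) auto
    finally have "\<beta>lo * (d k)\<^sup>2 \<le> (t k * d k) * M\<^sup>2" .
    then show ?thesis using \<beta>lo by (simp add: field_simps)
  qed
  have dsq_lim: "(\<lambda>k. (d k)\<^sup>2) \<longlonglongrightarrow> 0"
  proof (rule tendsto_sandwich[of "\<lambda>_. 0" _ _ "\<lambda>k. (M\<^sup>2 / \<beta>lo) * (t k * d k)"])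
    show "\<forall>\<^sub>F n in sequentially. 0 \<le> (d n)\<^sup>2" by simp
    show "\<forall>\<^sub>F n in sequentially. (d n)\<^sup>2 \<le> M\<^sup>2 / \<beta>lo * (t n * d n)" using dsq by simp
    show "(\<lambda>n. 0) \<longlonglongrightarrow> (0::real)" by simp
    show "(\<lambda>k. M\<^sup>2 / \<beta>lo * (t k * d k)) \<longlonglongrightarrow> 0" using tendsto_mult_right_zero[OF td_lim, of "M\<^sup>2 / \<beta>lo"] .
  qed
  have "(\<lambda>k. sqrt ((d k)\<^sup>2)) \<longlonglongrightarrow> sqrt 0" by (rule tendsto_real_sqrt[OF dsq_lim])
  moreover have "(\<lambda>k. sqrt ((d k)\<^sup>2)) = d" using dpos by (intro ext) (simp add: less_imp_le)
  ultimately have d_lim: "d \<longlonglongrightarrow> 0" by simp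
  have f_lim: "(\<lambda>k. f (x k)) \<longlonglongrightarrow> fs"
    using tendsto_add[OF d_lim tendsto_const[of fs]] unfolding d_def by simp
  have "compact (cball xo R \<inter> C)" by (rule compact_Int_closed[OF compact_cball C_closed])
  then have "seq_compact (cball xo R \<inter> C)" by (rule compact_imp_seq_compact)
  moreover have "\<forall>n. x n \<in> cball xo R \<inter> C" using xball xC by (simp add: dist_norm norm_minus_commute)
  ultimately obtain xb r where xb: "xb \<in> cball xo R \<inter> C" and r: "strict_mono r"
    and lim: "(x \<circ> r) \<longlonglongrightarrow> xb" by (rule seq_compactE)
  have "(\<lambda>n. f ((x \<circ> r) n)) \<longlonglongrightarrow> f xb"
    using continuous_on_tendsto_compose[OF fcont lim] by simp
  moreover have "(\<lambda>n. f ((x \<circ> r) n)) \<longlonglongrightarrow> fs"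
    using LIMSEQ_subseq_LIMSEQ[OF f_lim r] by (simp add: comp_def)
  ultimately have fxb: "f xb = fs" by (rule LIMSEQ_unique)
  have xbopt: "xb \<in> opt_set f C" unfolding opt_set_def using xb fxb fs_le by auto
  have "x \<longlonglongrightarrow> xb"
  proof (rule LIMSEQ_I)
    fix e :: real assume e: "e > 0"
    have "(\<lambda>n. x (r n) - xb) \<longlonglongrightarrow> 0" using lim by (simp add: comp_def LIM_zero)
    from LIMSEQ_D[OF this e] obtain N where "\<forall>n\<ge>N. norm (x (r n) - xb - 0) < e" by blast
    then have N: "norm (x (r N) - xb) < e" by simp
    show "\<exists>no. \<forall>n\<ge>no. norm (x n - xb) < e"
    proof (intro exI[of _ "r N"] allI impI)
      fix n assume "n \<ge> r N"
      then have "norm (x n - xb) \<le> norm (x (r N) - xb)" by (rule monoN[OF xbopt])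
      then show "norm (x n - xb) < e" using N by linarith
    qed
  qed
  then show ?thesis using xbopt by blast
qed

end
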